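(* Let $q_0$ be a distribution on $[S]^d$ and consider the masking noising process started from $q_0$. Then $$\mathcal B(q_0)=\int_0^\infty\mathcal I(t)\,dt\qquad\text{and}\qquad\mathcal C(q_0)=\int_0^\infty(e^t-1)\,\mathcal I(t)\,dt.$$ Consequently $\mathcal D(q_0)\le\min\{\mathcal B(q_0),\mathcal C(q_0)\}$.
   Context: For $x\sim q$ on $[S]^d$: total correlation $\mathcal C(q)=\sum_{i=1}^d\mathcal H(x^i)-\mathcal H(x)$; dual total correlation $\mathcal B(q)=\mathcal H(x)-\sum_{i=1}^d\mathcal H(x^i\mid x^{-i})$ ($\mathcal H$ Shannon entropy). Masking noising process: starting from $x_0\sim q_0$, each coordinate independently is replaced by the symbol MASK at an Exp(1) time and stays masked; $x_t$ is the state at time $t$. $\mathcal I(t)=\sum_{i\neq j\in[d]}\mathrm I\big(x_t^i;x_t^j\mid(x_t^k)_{k\notin\{i,j\}}\big)$ (conditional mutual information, MASK treated as a symbol); effective total correlation $\mathcal D(q_0)=\int_0^\infty\min(1,t)\mathcal I(t)\,dt$. *)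

theory Defs
  imports "HOL-Probability.Probability"
begin

definition shannon_entropy :: "'a pmf \<Rightarrow> real" where
  "shannon_entropy \<mu> = - (\<Sum>x\<in>set_pmf \<mu>. pmf \<mu> x * ln (pmf \<mu> x))"

definition ent_coords :: "('i \<Rightarrow> 'b) pmf \<Rightarrow> 'i set \<Rightarrow> real" where
  "ent_coords \<mu> A = shannon_entropy (map_pmf (\<lambda>x. restrict x A) \<mu>)"

definition ent_coord :: "('i \<Rightarrow> 'b) pmf \<Rightarrow> 'i \<Rightarrow> real" where
  "ent_coord \<mu> i = shannon_entropy (map_pmf (\<lambda>x. x i) \<mu>)"

definition cond_ent_coords :: "('i \<Rightarrow> 'b) pmf \<Rightarrow> 'i set \<Rightarrow> 'i set \<Rightarrow> real" where
  "cond_ent_coords \<mu> A B = ent_coords \<mu> (A \<union> B) - ent_coords \<mu> B"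

definition cond_mutual_info :: "('i \<Rightarrow> 'b) pmf \<Rightarrow> 'i \<Rightarrow> 'i \<Rightarrow> 'i set \<Rightarrow> real" where
  "cond_mutual_info \<mu> i j K = cond_ent_coords \<mu> {i} K - cond_ent_coords \<mu> {i} ({j} \<union> K)"

definition total_correlation :: "nat \<Rightarrow> (nat \<Rightarrow> 'b) pmf \<Rightarrow> real" where
  "total_correlation d q = (\<Sum>i<d. ent_coord q i) - ent_coords q {..<d}"

definition dual_total_correlation :: "nat \<Rightarrow> (nat \<Rightarrow> 'b) pmf \<Rightarrow> real" where
  "dual_total_correlation d q =
     ent_coords q {..<d} - (\<Sum>i<d. cond_ent_coords q {i} ({..<d} - {i}))"

text \<open>Masking process: None is the symbol MASK. Each coordinate independently is
  masked by time t with probability 1 - exp(-t), i.e. kept with probability exp(-t).\<close>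
definition masked :: "nat \<Rightarrow> (nat \<Rightarrow> 'b) pmf \<Rightarrow> real \<Rightarrow> (nat \<Rightarrow> 'b option) pmf" where
  "masked d q0 t = bind_pmf q0 (\<lambda>x. Pi_pmf {..<d} None
      (\<lambda>i. map_pmf (\<lambda>keep. if keep then Some (x i) else None) (bernoulli_pmf (exp (- t)))))"

definition cmi_sum :: "nat \<Rightarrow> (nat \<Rightarrow> 'b) pmf \<Rightarrow> real \<Rightarrow> real" where
  "cmi_sum d q0 t = (\<Sum>i<d. \<Sum>j\<in>{..<d} - {i}.
      cond_mutual_info (masked d q0 t) i j ({..<d} - {i, j}))"

definition effective_total_correlation :: "nat \<Rightarrow> (nat \<Rightarrow> 'b) pmf \<Rightarrow> real" where
  "effective_total_correlation d q0 = integral {0..} (\<lambda>t. min 1 t * cmi_sum d q0 t)"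

end

theory Submission
  imports Defs
begin

lemma entropy_map_inj:
  assumes "inj_on f (set_pmf \<mu>)"
  shows "shannon_entropy (map_pmf f \<mu>) = shannon_entropy \<mu>"
proof -
  have "shannon_entropy (map_pmf f \<mu>) =
      -(\<Sum>y\<in>f ` set_pmf \<mu>. pmf (map_pmf f \<mu>) y * ln (pmf (map_pmf f \<mu>) y))"
    by (simp add: shannon_entropy_def)
  also have "\<dots> = -(\<Sum>x\<in>set_pmf \<mu>. pmf (map_pmf f \<mu>) (f x) * ln (pmf (map_pmf f \<mu>) (f x)))"
    by (subst sum.reindex[OF assms]) simp
  also have "\<dots> = -(\<Sum>x\<in>set_pmf \<mu>. pmf \<mu> x * ln (pmf \<mu> x))"
    using pmf_map_inj[OF assms] by simp
  finally show ?thesis by (simp add: shannon_entropy_def)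
qed

lemma entropy_return: "shannon_entropy (return_pmf x) = 0"
  by (simp add: shannon_entropy_def)

lemma pmf_map_finite_sum:
  assumes "finite (set_pmf \<mu>)"
  shows "pmf (map_pmf f \<mu>) y = (\<Sum>x\<in>{x\<in>set_pmf \<mu>. f x = y}. pmf \<mu> x)"
proof -
  have "pmf (map_pmf f \<mu>) y = measure \<mu> (f -` {y} \<inter> set_pmf \<mu>)"
    by (simp add: pmf_map measure_Int_set_pmf)
  also have "f -` {y} \<inter> set_pmf \<mu> = {x\<in>set_pmf \<mu>. f x = y}" by auto
  also have "measure \<mu> {x\<in>set_pmf \<mu>. f x = y} = (\<Sum>x\<in>{x\<in>set_pmf \<mu>. f x = y}. pmf \<mu> x)"
    using assms by (intro measure_measure_pmf_finite) auto
  finally show ?thesis .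
qed

lemma entropy_map_sum:
  assumes fin: "finite (set_pmf \<mu>)"
  shows "shannon_entropy (map_pmf f \<mu>) =
     - (\<Sum>x\<in>set_pmf \<mu>. pmf \<mu> x * ln (pmf (map_pmf f \<mu>) (f x)))"
proof -
  let ?L = "\<lambda>y. ln (pmf (map_pmf f \<mu>) y)"
  have "(\<Sum>x\<in>set_pmf \<mu>. pmf \<mu> x * ?L (f x)) =
        (\<Sum>y\<in>f ` set_pmf \<mu>. \<Sum>x\<in>{x\<in>set_pmf \<mu>. f x = y}. pmf \<mu> x * ?L (f x))"
    by (rule sum.image_gen[OF fin])
  also have "\<dots> = (\<Sum>y\<in>f ` set_pmf \<mu>. (\<Sum>x\<in>{x\<in>set_pmf \<mu>. f x = y}. pmf \<mu> x) * ?L y)"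
    by (intro sum.cong refl) (auto simp: sum_distrib_right)
  also have "\<dots> = (\<Sum>y\<in>f ` set_pmf \<mu>. pmf (map_pmf f \<mu>) y * ?L y)"
    by (intro sum.cong refl) (simp add: pmf_map_finite_sum[OF fin])
  finally show ?thesis by (simp add: shannon_entropy_def)
qed

lemma entropy_mixture:
  assumes fin: "finite (set_pmf \<nu>)"
    and fin2: "\<And>a. a \<in> set_pmf \<nu> \<Longrightarrow> finite (set_pmf (\<mu> a))"
    and disj: "\<And>a b. a \<in> set_pmf \<nu> \<Longrightarrow> b \<in> set_pmf \<nu> \<Longrightarrow> a \<noteq> b \<Longrightarrow>
                 set_pmf (\<mu> a) \<inter> set_pmf (\<mu> b) = {}"
  shows "shannon_entropy (bind_pmf \<nu> \<mu>) =
    shannon_entropy \<nu> + (\<Sum>a\<in>set_pmf \<nu>. pmf \<nu> a * shannon_entropy (\<mu> a))"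
proof -
  have pb: "pmf (bind_pmf \<nu> \<mu>) y = pmf \<nu> a * pmf (\<mu> a) y"
    if a: "a \<in> set_pmf \<nu>" and y: "y \<in> set_pmf (\<mu> a)" for a y
  proof -
    have "pmf (bind_pmf \<nu> \<mu>) y = (\<Sum>b\<in>{a}. pmf (\<mu> b) y * pmf \<nu> b)"
      unfolding pmf_bind
    proof (rule integral_measure_pmf_real)
      fix b assume "b \<in> set_pmf \<nu>" "pmf (\<mu> b) y \<noteq> 0"
      then have "y \<in> set_pmf (\<mu> b)" by (simp add: set_pmf_eq)
      then show "b \<in> {a}" using disj[of a b] a y \<open>b \<in> set_pmf \<nu>\<close> by blast
    qed simp
    then show ?thesis by simp
  qed
  have "shannon_entropy (bind_pmf \<nu> \<mu>) =
     - (\<Sum>a\<in>set_pmf \<nu>. \<Sum>y\<in>set_pmf (\<mu> a). pmf (bind_pmf \<nu> \<mu>) y * ln (pmf (bind_pmf \<nu> \<mu>) y))"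
    unfolding shannon_entropy_def set_bind_pmf
    by (subst sum.UNION_disjoint) (use fin fin2 disj in \<open>auto simp: disjoint_iff\<close>)
  also have "\<dots> = - (\<Sum>a\<in>set_pmf \<nu>. \<Sum>y\<in>set_pmf (\<mu> a).
        pmf \<nu> a * pmf (\<mu> a) y * (ln (pmf \<nu> a) + ln (pmf (\<mu> a) y)))"
    by (intro arg_cong[of _ _ uminus] sum.cong refl)
       (auto simp: pb ln_mult set_pmf_iff pmf_nonneg order.strict_iff_order)
  also have "\<dots> = - (\<Sum>a\<in>set_pmf \<nu>. pmf \<nu> a * ln (pmf \<nu> a) * (\<Sum>y\<in>set_pmf (\<mu> a). pmf (\<mu> a) y)
        + pmf \<nu> a * (\<Sum>y\<in>set_pmf (\<mu> a). pmf (\<mu> a) y * ln (pmf (\<mu> a) y)))"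
    by (intro arg_cong[of _ _ uminus] sum.cong refl)
       (simp add: sum_distrib_left sum.distrib algebra_simps)
  also have "\<dots> = - (\<Sum>a\<in>set_pmf \<nu>. pmf \<nu> a * ln (pmf \<nu> a)
        + pmf \<nu> a * (\<Sum>y\<in>set_pmf (\<mu> a). pmf (\<mu> a) y * ln (pmf (\<mu> a) y)))"
    by (intro arg_cong[of _ _ uminus] sum.cong refl) (simp add: sum_pmf_eq_1 fin2)
  finally show ?thesis
    by (simp add: shannon_entropy_def sum.distrib sum_negf sum_distrib_left)
qed


lemma marginal_sum:
  assumes fin: "finite (set_pmf \<mu>)"
  shows "pmf (map_pmf snd \<mu>) c = (\<Sum>a\<in>fst ` set_pmf \<mu>. pmf \<mu> (a, c))"
proof -
  have inj: "inj_on (\<lambda>a. (a, c)) (fst ` set_pmf \<mu>)" by (auto simp: inj_on_def)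
  have "(\<Sum>a\<in>fst ` set_pmf \<mu>. pmf \<mu> (a, c)) = (\<Sum>x\<in>(\<lambda>a. (a, c)) ` fst ` set_pmf \<mu>. pmf \<mu> x)"
    by (subst sum.reindex[OF inj]) simp
  also have "\<dots> = (\<Sum>x\<in>{x\<in>set_pmf \<mu>. snd x = c}. pmf \<mu> x)"
  proof (rule sum.mono_neutral_right)
    show "finite ((\<lambda>a. (a, c)) ` fst ` set_pmf \<mu>)" using fin by simp
    show "{x \<in> set_pmf \<mu>. snd x = c} \<subseteq> (\<lambda>a. (a, c)) ` fst ` set_pmf \<mu>"
      by (force simp: image_iff)
    show "\<forall>i\<in>(\<lambda>a. (a, c)) ` fst ` set_pmf \<mu> - {x \<in> set_pmf \<mu>. snd x = c}. pmf \<mu> i = 0"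
      by (auto simp: set_pmf_eq)
  qed
  finally show ?thesis by (simp add: pmf_map_finite_sum[OF fin])
qed

lemma pmf_map_pos:
  "x \<in> set_pmf \<mu> \<Longrightarrow> pmf (map_pmf f \<mu>) (f x) > 0"
  using pmf_positive by (metis imageI set_map_pmf)

lemma entropy_submod:
  fixes \<nu> :: "('a \<times> 'b \<times> 'c) pmf"
  assumes fin: "finite (set_pmf \<nu>)"
  shows "shannon_entropy \<nu> + shannon_entropy (map_pmf (\<lambda>(a,b,c). c) \<nu>)
       \<le> shannon_entropy (map_pmf (\<lambda>(a,b,c). (a,c)) \<nu>) + shannon_entropy (map_pmf (\<lambda>(a,b,c). (b,c)) \<nu>)"
proof -
  define S where "S = set_pmf \<nu>"
  define fa :: "'a \<times> 'b \<times> 'c \<Rightarrow> 'a \<times> 'c" where "fa = (\<lambda>(a,b,c). (a,c))"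
  define fb :: "'a \<times> 'b \<times> 'c \<Rightarrow> 'b \<times> 'c" where "fb = (\<lambda>(a,b,c). (b,c))"
  define fc :: "'a \<times> 'b \<times> 'c \<Rightarrow> 'c" where "fc = (\<lambda>(a,b,c). c)"
  define PA where "PA = map_pmf fa \<nu>"
  define PB where "PB = map_pmf fb \<nu>"
  define PC where "PC = map_pmf fc \<nu>"
  define Q where "Q = (\<lambda>w. pmf PA (fa w) * pmf PB (fb w) / pmf PC (fc w))"
  have finS: "finite S" using fin by (simp add: S_def)
  have pos: "pmf \<nu> w > 0" "pmf PA (fa w) > 0" "pmf PB (fb w) > 0" "pmf PC (fc w) > 0" if "w \<in> S" for w
    using that pmf_map_pos[of w \<nu>] pmf_positive[of w \<nu>]
    by (auto simp: S_def PA_def PB_def PC_def)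
  define SA where "SA = fst ` S"
  define SB where "SB = fst ` snd ` S"
  define SC where "SC = snd ` snd ` S"
  have finT: "finite SA" "finite SB" "finite SC" using finS by (auto simp: SA_def SB_def SC_def)
  have ST: "S \<subseteq> SA \<times> SB \<times> SC" by (force simp: SA_def SB_def SC_def)
  have Qnn: "Q w \<ge> 0" for w by (simp add: Q_def)
  have margA: "(\<Sum>a\<in>SA. pmf PA (a, c)) = pmf PC c" for c
  proof -
    have "map_pmf snd PA = PC" by (auto simp: PA_def PC_def map_pmf_comp fa_def fc_def intro!: map_pmf_cong)
    moreover have "fst ` set_pmf PA = SA"
      by (force simp: PA_def SA_def S_def fa_def split_beta image_iff)
    moreover have "finite (set_pmf PA)" using fin by (simp add: PA_def)
    ultimately show ?thesis using marginal_sum[of PA c] by simp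
  qed
  have margB: "(\<Sum>b\<in>SB. pmf PB (b, c)) = pmf PC c" for c
  proof -
    have "map_pmf snd PB = PC" by (auto simp: PB_def PC_def map_pmf_comp fb_def fc_def intro!: map_pmf_cong)
    moreover have "fst ` set_pmf PB = SB"
      by (force simp: PB_def SB_def S_def fb_def split_beta image_iff)
    moreover have "finite (set_pmf PB)" using fin by (simp add: PB_def)
    ultimately show ?thesis using marginal_sum[of PB c] by simp
  qed
  have setC: "set_pmf PC = SC" by (force simp: PC_def SC_def S_def fc_def split_beta image_iff)
  have SCpos: "c \<in> SC \<Longrightarrow> pmf PC c > 0" for c using setC pmf_positive by metis
  have "(\<Sum>w\<in>S. Q w) \<le> (\<Sum>w\<in>SA \<times> SB \<times> SC. Q w)"
    by (rule sum_mono2) (use finT ST Qnn in auto)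
  also have "\<dots> = (\<Sum>a\<in>SA. \<Sum>b\<in>SB. \<Sum>c\<in>SC. pmf PA (a,c) * pmf PB (b,c) / pmf PC c)"
    unfolding sum.cartesian_product by (intro sum.cong refl) (auto simp: Q_def fa_def fb_def fc_def)
  also have "\<dots> = (\<Sum>a\<in>SA. \<Sum>c\<in>SC. \<Sum>b\<in>SB. pmf PA (a,c) * pmf PB (b,c) / pmf PC c)"
    by (intro sum.cong refl) (rule sum.swap)
  also have "\<dots> = (\<Sum>c\<in>SC. \<Sum>a\<in>SA. \<Sum>b\<in>SB. pmf PA (a,c) * pmf PB (b,c) / pmf PC c)"
    by (rule sum.swap)
  also have "\<dots> = (\<Sum>c\<in>SC. (\<Sum>a\<in>SA. pmf PA (a,c)) * (\<Sum>b\<in>SB. pmf PB (b,c)) / pmf PC c)"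
    by (intro sum.cong refl) (simp add: sum_product sum_divide_distrib)
  also have "\<dots> = (\<Sum>c\<in>SC. pmf PC c)"
    using SCpos by (intro sum.cong refl) (simp add: margA margB)
  also have "\<dots> = 1" using finT setC by (simp add: sum_pmf_eq_1)
  finally have Qle: "(\<Sum>w\<in>S. Q w) \<le> 1" .
  have key: "(\<Sum>w\<in>S. pmf \<nu> w * (ln (pmf PA (fa w)) + ln (pmf PB (fb w)) - ln (pmf \<nu> w) - ln (pmf PC (fc w))))
        \<le> (\<Sum>w\<in>S. Q w - pmf \<nu> w)"
  proof (rule sum_mono)
    fix w assume w: "w \<in> S"
    note p = pos[OF w]
    have "ln (pmf PA (fa w)) + ln (pmf PB (fb w)) - ln (pmf \<nu> w) - ln (pmf PC (fc w))
        = ln (Q w / pmf \<nu> w)"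
      using p by (simp add: Q_def ln_mult ln_div)
    also have "\<dots> \<le> Q w / pmf \<nu> w - 1"
      using p by (intro ln_le_minus_one) (simp add: Q_def)
    finally have "pmf \<nu> w * (ln (pmf PA (fa w)) + ln (pmf PB (fb w)) - ln (pmf \<nu> w) - ln (pmf PC (fc w)))
        \<le> pmf \<nu> w * (Q w / pmf \<nu> w - 1)"
      using p by (intro mult_left_mono) auto
    also have "\<dots> = Q w - pmf \<nu> w" using p by (simp add: field_simps)
    finally show "pmf \<nu> w * (ln (pmf PA (fa w)) + ln (pmf PB (fb w)) - ln (pmf \<nu> w) - ln (pmf PC (fc w)))
        \<le> Q w - pmf \<nu> w" .
  qed
  also have "\<dots> = (\<Sum>w\<in>S. Q w) - 1"
    using finS by (simp add: sum_subtractf S_def sum_pmf_eq_1)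
  finally have key2: "(\<Sum>w\<in>S. pmf \<nu> w * (ln (pmf PA (fa w)) + ln (pmf PB (fb w)) - ln (pmf \<nu> w) - ln (pmf PC (fc w)))) \<le> 0"
    using Qle by simp
  have Hn: "shannon_entropy \<nu> = - (\<Sum>w\<in>S. pmf \<nu> w * ln (pmf \<nu> w))"
    by (simp add: shannon_entropy_def S_def)
  have HA: "shannon_entropy PA = - (\<Sum>w\<in>S. pmf \<nu> w * ln (pmf PA (fa w)))"
    unfolding PA_def S_def by (rule entropy_map_sum[OF fin])
  have HB: "shannon_entropy PB = - (\<Sum>w\<in>S. pmf \<nu> w * ln (pmf PB (fb w)))"
    unfolding PB_def S_def by (rule entropy_map_sum[OF fin])
  have HC: "shannon_entropy PC = - (\<Sum>w\<in>S. pmf \<nu> w * ln (pmf PC (fc w)))"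
    unfolding PC_def S_def by (rule entropy_map_sum[OF fin])
  have "shannon_entropy \<nu> + shannon_entropy PC \<le> shannon_entropy PA + shannon_entropy PB"
  proof -
    have "(\<Sum>w\<in>S. pmf \<nu> w * (ln (pmf PA (fa w)) + ln (pmf PB (fb w)) - ln (pmf \<nu> w) - ln (pmf PC (fc w))))
      = (\<Sum>w\<in>S. pmf \<nu> w * ln (pmf PA (fa w))) + (\<Sum>w\<in>S. pmf \<nu> w * ln (pmf PB (fb w)))
        - (\<Sum>w\<in>S. pmf \<nu> w * ln (pmf \<nu> w)) - (\<Sum>w\<in>S. pmf \<nu> w * ln (pmf PC (fc w)))"
      by (simp add: algebra_simps sum.distrib sum_subtractf)
    then show ?thesis using key2 unfolding Hn HA HB HC by linarith
  qed
  then show ?thesis by (simp add: PA_def PB_def PC_def fa_def fb_def fc_def)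
qed


definition EP :: "'i set \<Rightarrow> ('i set \<Rightarrow> real) \<Rightarrow> real \<Rightarrow> real" where
  "EP A g p = (\<Sum>N\<in>Pow A. p ^ card N * (1 - p) ^ (card A - card N) * g N)"

lemma EP_empty [simp]: "EP {} g p = g {}"
  by (simp add: EP_def)

lemma EP_insert:
  assumes fin: "finite A" and a: "a \<notin> A"
  shows "EP (insert a A) g p = p * EP A (\<lambda>N. g (insert a N)) p + (1 - p) * EP A g p"
proof -
  have inj: "inj_on (insert a) (Pow A)" using a by (auto simp: inj_on_def)
  have disj: "Pow A \<inter> insert a ` Pow A = {}" using a by auto
  have cA: "card (insert a A) = Suc (card A)" using fin a by simp
  have "EP (insert a A) g p = (\<Sum>N\<in>Pow A. p ^ card N * (1 - p) ^ (Suc (card A) - card N) * g N)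
      + (\<Sum>N\<in>insert a ` Pow A. p ^ card N * (1 - p) ^ (Suc (card A) - card N) * g N)"
    unfolding EP_def Pow_insert cA using fin disj by (intro sum.union_disjoint) auto
  also have "(\<Sum>N\<in>insert a ` Pow A. p ^ card N * (1 - p) ^ (Suc (card A) - card N) * g N)
     = (\<Sum>N\<in>Pow A. p * (p ^ card N * (1 - p) ^ (card A - card N) * g (insert a N)))"
  proof (subst sum.reindex[OF inj], intro sum.cong refl)
    fix N assume "N \<in> Pow A"
    then have "finite N" "a \<notin> N" using fin a finite_subset by auto
    then show "((\<lambda>N. p ^ card N * (1 - p) ^ (Suc (card A) - card N) * g N) \<circ> insert a) N =
        p * (p ^ card N * (1 - p) ^ (card A - card N) * g (insert a N))" by simp
  qed
  also have "(\<Sum>N\<in>Pow A. p ^ card N * (1 - p) ^ (Suc (card A) - card N) * g N)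
     = (\<Sum>N\<in>Pow A. (1 - p) * (p ^ card N * (1 - p) ^ (card A - card N) * g N))"
  proof (intro sum.cong refl)
    fix N assume "N \<in> Pow A"
    then have "card N \<le> card A" using fin by (auto intro: card_mono)
    then have "Suc (card A) - card N = Suc (card A - card N)" by simp
    then show "p ^ card N * (1 - p) ^ (Suc (card A) - card N) * g N =
        (1 - p) * (p ^ card N * (1 - p) ^ (card A - card N) * g N)" by simp
  qed
  finally show ?thesis by (simp add: EP_def sum_distrib_left)
qed

lemma EP_diff: "EP A (\<lambda>N. f N - g N) p = EP A f p - EP A g p"
  by (simp add: EP_def sum_subtractf algebra_simps)

lemma EP_uminus: "EP A (\<lambda>N. - f N) p = - EP A f p"
  by (simp add: EP_def sum_negf)

lemma EP_cong: "(\<And>N. N \<subseteq> A \<Longrightarrow> f N = g N) \<Longrightarrow> EP A f p = EP A g p"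
  by (simp add: EP_def)

lemma EP_nonneg:
  assumes "0 \<le> p" "p \<le> 1" "\<And>N. N \<subseteq> A \<Longrightarrow> g N \<ge> 0"
  shows "EP A g p \<ge> 0"
  unfolding EP_def using assms by (intro sum_nonneg mult_nonneg_nonneg) auto

lemma EP_1: "finite A \<Longrightarrow> EP A g 1 = g A"
proof (induction A arbitrary: g rule: finite_induct)
  case (insert a A)
  then show ?case by (simp add: EP_insert)
qed simp

lemma EP_0: "finite A \<Longrightarrow> EP A g 0 = g {}"
proof (induction A arbitrary: g rule: finite_induct)
  case (insert a A)
  then show ?case by (simp add: EP_insert)
qed simp

lemma EP_deriv:
  assumes "finite A"
  shows "((\<lambda>p. EP A g p) has_real_derivative
           (\<Sum>a\<in>A. EP (A - {a}) (\<lambda>N. g (insert a N) - g N) p)) (at p)"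
  using assms
proof (induction A arbitrary: g rule: finite_induct)
  case empty
  then show ?case by simp
next
  case (insert a A)
  let ?D = "\<lambda>f. (\<Sum>b\<in>A. EP (A - {b}) (\<lambda>N. f (insert b N) - f N) p)"
  have eq: "(\<lambda>p. EP (insert a A) g p) = (\<lambda>p. p * EP A (\<lambda>N. g (insert a N)) p + (1 - p) * EP A g p)"
    using insert by (simp add: EP_insert)
  have "((\<lambda>p. p * EP A (\<lambda>N. g (insert a N)) p + (1 - p) * EP A g p) has_real_derivative
      (p * ?D (\<lambda>N. g (insert a N)) + 1 * EP A (\<lambda>N. g (insert a N)) p
       + ((1 - p) * ?D g + (0 - 1) * EP A g p))) (at p)"
    by (intro DERIV_add DERIV_mult' DERIV_diff DERIV_ident DERIV_const insert.IH)
  moreover have "p * ?D (\<lambda>N. g (insert a N)) + 1 * EP A (\<lambda>N. g (insert a N)) p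
       + ((1 - p) * ?D g + (0 - 1) * EP A g p)
     = (\<Sum>b\<in>insert a A. EP (insert a A - {b}) (\<lambda>N. g (insert b N) - g N) p)"
  proof -
    have s1: "(\<Sum>b\<in>insert a A. EP (insert a A - {b}) (\<lambda>N. g (insert b N) - g N) p)
        = EP A (\<lambda>N. g (insert a N) - g N) p
          + (\<Sum>b\<in>A. EP (insert a (A - {b})) (\<lambda>N. g (insert b N) - g N) p)"
      using insert by (simp add: insert_Diff_if, intro sum.cong refl, auto)
    have s2: "EP (insert a (A - {b})) (\<lambda>N. g (insert b N) - g N) p
        = p * EP (A - {b}) (\<lambda>N. g (insert a (insert b N)) - g (insert a N)) p
          + (1 - p) * EP (A - {b}) (\<lambda>N. g (insert b N) - g N) p" if "b \<in> A" for b
      using insert that by (subst EP_insert) (auto simp: insert_commute)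
    have s3: "(\<Sum>b\<in>A. EP (insert a (A - {b})) (\<lambda>N. g (insert b N) - g N) p)
       = p * ?D (\<lambda>N. g (insert a N)) + (1 - p) * ?D g"
      unfolding sum_distrib_left sum.distrib[symmetric] by (rule sum.cong[OF refl]) (rule s2)
    show ?thesis unfolding s1 s3 EP_diff[of A "\<lambda>N. g (insert a N)" g] by (simp add: algebra_simps)
  qed
  ultimately show ?case unfolding eq by simp
qed


definition mkm :: "(nat \<Rightarrow> 'b) \<Rightarrow> (nat \<Rightarrow> bool) \<Rightarrow> nat \<Rightarrow> 'b option" where
  "mkm x b = (\<lambda>i. if b i then Some (x i) else None)"

lemma mkm_apply: "mkm x b i = (if b i then Some (x i) else None)"
  by (simp add: mkm_def)

lemma masked_alt:
  "masked d q0 t = bind_pmf q0 (\<lambda>x. map_pmf (\<lambda>b i. if i \<in> {..<d} then mkm x b i else None)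
      (Pi_pmf {..<d} False (\<lambda>_. bernoulli_pmf (exp (- t)))))"
  unfolding masked_def
proof (intro bind_pmf_cong refl)
  fix x :: "nat \<Rightarrow> 'b"
  let ?P = "bernoulli_pmf (exp (- t))"
  have "Pi_pmf {..<d} None (\<lambda>i. map_pmf (\<lambda>keep. if keep then Some (x i) else None) ?P)
      = Pi_pmf {..<d} None (\<lambda>i. bind_pmf ?P (\<lambda>keep. return_pmf (if keep then Some (x i) else None)))"
    by (simp add: map_pmf_def)
  also have "\<dots> = bind_pmf (Pi_pmf {..<d} False (\<lambda>_. ?P))
       (\<lambda>b. Pi_pmf {..<d} None (\<lambda>i. return_pmf (if b i then Some (x i) else None)))"
    by (rule Pi_pmf_bind[where d' = False]) simp
  also have "\<dots> = bind_pmf (Pi_pmf {..<d} False (\<lambda>_. ?P))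
       (\<lambda>b. return_pmf (\<lambda>i. if i \<in> {..<d} then mkm x b i else None))"
    unfolding mkm_def by simp
  also have "\<dots> = map_pmf (\<lambda>b i. if i \<in> {..<d} then mkm x b i else None) (Pi_pmf {..<d} False (\<lambda>_. ?P))"
    by (simp add: map_pmf_def)
  finally show "Pi_pmf {..<d} None (\<lambda>i. map_pmf (\<lambda>keep. if keep then Some (x i) else None) ?P)
      = map_pmf (\<lambda>b i. if i \<in> {..<d} then mkm x b i else None) (Pi_pmf {..<d} False (\<lambda>_. ?P))" .
qed

lemma masked_restrict:
  assumes A: "A \<subseteq> {..<d}"
  shows "map_pmf (\<lambda>x. restrict x A) (masked d q0 t) =
     bind_pmf (Pi_pmf A False (\<lambda>_. bernoulli_pmf (exp (- t))))
       (\<lambda>b. map_pmf (\<lambda>x. restrict (mkm x b) A) q0)"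
proof -
  let ?P = "bernoulli_pmf (exp (- t))"
  let ?Bd = "Pi_pmf {..<d} False (\<lambda>_. ?P)"
  let ?BA = "Pi_pmf A False (\<lambda>_. ?P)"
  let ?cut = "\<lambda>b i. if i \<in> A then b i else False"
  have BA: "?BA = map_pmf ?cut ?Bd" by (rule Pi_pmf_subset[OF _ A]) simp
  have "map_pmf (\<lambda>x. restrict x A) (masked d q0 t) =
     bind_pmf q0 (\<lambda>x. map_pmf (\<lambda>b. restrict (\<lambda>i. if i \<in> {..<d} then mkm x b i else None) A) ?Bd)"
    by (simp add: masked_alt map_bind_pmf map_pmf_comp)
  also have "\<dots> = bind_pmf q0 (\<lambda>x. map_pmf (\<lambda>b. restrict (mkm x b) A) ?BA)"
    unfolding BA map_pmf_comp using A
    by (intro bind_pmf_cong refl map_pmf_cong) (auto simp: restrict_def mkm_def fun_eq_iff)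
  also have "\<dots> = bind_pmf q0 (\<lambda>x. bind_pmf ?BA (\<lambda>b. return_pmf (restrict (mkm x b) A)))"
    by (simp add: map_pmf_def)
  also have "\<dots> = bind_pmf ?BA (\<lambda>b. bind_pmf q0 (\<lambda>x. return_pmf (restrict (mkm x b) A)))"
    by (rule bind_commute_pmf)
  also have "\<dots> = bind_pmf ?BA (\<lambda>b. map_pmf (\<lambda>x. restrict (mkm x b) A) q0)"
    by (simp add: map_pmf_def)
  finally show ?thesis .
qed


lemma entropy_pair:
  assumes "finite (set_pmf \<mu>)" "finite (set_pmf \<nu>)"
  shows "shannon_entropy (pair_pmf \<mu> \<nu>) = shannon_entropy \<mu> + shannon_entropy \<nu>"
proof -
  have eq: "pair_pmf \<mu> \<nu> = bind_pmf \<mu> (\<lambda>x. map_pmf (Pair x) \<nu>)"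
    by (simp add: pair_pmf_def map_pmf_def)
  have "shannon_entropy (pair_pmf \<mu> \<nu>) = shannon_entropy \<mu> + (\<Sum>a\<in>set_pmf \<mu>. pmf \<mu> a * shannon_entropy (map_pmf (Pair a) \<nu>))"
    unfolding eq by (rule entropy_mixture) (use assms in auto)
  also have "\<dots> = shannon_entropy \<mu> + (\<Sum>a\<in>set_pmf \<mu>. pmf \<mu> a) * shannon_entropy \<nu>"
    by (simp add: entropy_map_inj inj_on_def sum_distrib_right)
  also have "\<dots> = shannon_entropy \<mu> + shannon_entropy \<nu>"
    using assms by (simp add: sum_pmf_eq_1)
  finally show ?thesis .
qed

lemma finite_set_Pi_pmf_bool:
  fixes Q :: "'i \<Rightarrow> bool pmf"
  assumes "finite A"
  shows "finite (set_pmf (Pi_pmf A False Q))"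
  using assms by (simp add: set_Pi_pmf finite_PiE_dflt)

lemma WA_insert:
  fixes P :: "bool pmf"
  assumes fin: "finite A" and a: "a \<notin> A"
  shows "shannon_entropy (Pi_pmf (insert a A) False (\<lambda>_. P)) =
         shannon_entropy P + shannon_entropy (Pi_pmf A False (\<lambda>_. P))"
proof -
  have inj: "inj_on (\<lambda>(y, f). f(a := y)) (set_pmf (pair_pmf P (Pi_pmf A False (\<lambda>_. P))))"
  proof (rule inj_onI, clarify)
    fix y f y' f'
    assume "(y, f) \<in> set_pmf (pair_pmf P (Pi_pmf A False (\<lambda>_. P)))"
       "(y', f') \<in> set_pmf (pair_pmf P (Pi_pmf A False (\<lambda>_. P)))"
       and eq: "f(a := y) = f'(a := y')"
    then have "f a = False" "f' a = False"
      using set_Pi_pmf_subset[OF fin, of False "\<lambda>_. P"] a by auto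
    moreover have "y = y'" using fun_cong[OF eq, of a] by simp
    moreover have "f x = f' x" if "x \<noteq> a" for x using fun_cong[OF eq, of x] that by simp
    ultimately have "f x = f' x" for x by (cases "x = a") auto
    then show "y = y' \<and> f = f'" using \<open>y = y'\<close> by auto
  qed
  show ?thesis
    using fin a inj
    by (simp add: Pi_pmf_insert entropy_map_inj entropy_pair finite_set_Pi_pmf_bool)
qed

lemma ent_coords_empty: "ent_coords \<mu> {} = 0"
proof -
  have "map_pmf (\<lambda>x. restrict x {}) \<mu> = return_pmf (\<lambda>_. undefined)"
    by (simp add: restrict_def map_pmf_const)
  then show ?thesis by (simp add: ent_coords_def entropy_return)
qed

lemma ent_masked:
  fixes q0 :: "(nat \<Rightarrow> 'b) pmf"
  assumes A: "A \<subseteq> {..<d}" and fin: "finite (set_pmf q0)" and t: "t \<ge> 0"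
  shows "ent_coords (masked d q0 t) A =
    shannon_entropy (Pi_pmf A False (\<lambda>_. bernoulli_pmf (exp (- t)))) + EP A (ent_coords q0) (exp (- t))"
proof -
  define p where "p = exp (- t)"
  have p: "0 < p" "p \<le> 1" using t by (auto simp: p_def)
  define BA where "BA = Pi_pmf A False (\<lambda>_. bernoulli_pmf p)"
  define \<mu> where "\<mu> = (\<lambda>b. map_pmf (\<lambda>x. restrict (mkm x b) A) q0)"
  have finA: "finite A" using A finite_subset by blast
  have finBA: "finite (set_pmf BA)" using finA by (simp add: BA_def finite_set_Pi_pmf_bool)
  have BAout: "\<not> b i" if "b \<in> set_pmf BA" "i \<notin> A" for b i
    using set_Pi_pmf_subset[OF finA, of False "\<lambda>_. bernoulli_pmf p"] that by (auto simp: BA_def)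
  have mix: "ent_coords (masked d q0 t) A =
      shannon_entropy BA + (\<Sum>b\<in>set_pmf BA. pmf BA b * shannon_entropy (\<mu> b))"
    unfolding ent_coords_def masked_restrict[OF A] p_def[symmetric] BA_def[symmetric] \<mu>_def[symmetric]
  proof (rule entropy_mixture[OF finBA])
    show "finite (set_pmf (\<mu> b))" for b using fin by (simp add: \<mu>_def)
    fix a b assume ab: "a \<in> set_pmf BA" "b \<in> set_pmf BA" "a \<noteq> b"
    show "set_pmf (\<mu> a) \<inter> set_pmf (\<mu> b) = {}"
    proof (rule ccontr)
      assume "set_pmf (\<mu> a) \<inter> set_pmf (\<mu> b) \<noteq> {}"
      then obtain x y :: "nat \<Rightarrow> 'b" where eq: "restrict (mkm x a) A = restrict (mkm y b) A" by (auto simp: \<mu>_def)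
      have "a i = b i" for i
      proof (cases "i \<in> A")
        case True then show ?thesis using fun_cong[OF eq, of i] by (auto simp: mkm_def split: if_splits)
      next
        case False then show ?thesis using BAout ab by blast
      qed
      then show False using ab by auto
    qed
  qed
  have H\<mu>: "shannon_entropy (\<mu> b) = ent_coords q0 {i. b i}" if b: "b \<in> set_pmf BA" for b
  proof -
    let ?N = "{i. b i}"
    have NA: "?N \<subseteq> A" using BAout[OF b] by blast
    have eq\<mu>: "\<mu> b = map_pmf (\<lambda>g. restrict (mkm g b) A) (map_pmf (\<lambda>x. restrict x ?N) q0)"
      unfolding \<mu>_def map_pmf_comp by (intro map_pmf_cong refl) (auto simp: restrict_def mkm_def fun_eq_iff)
    have inj: "inj_on (\<lambda>g. restrict (mkm g b) A) (set_pmf (map_pmf (\<lambda>x. restrict x ?N) q0))"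
    proof (rule inj_onI)
      fix g g' assume g: "g \<in> set_pmf (map_pmf (\<lambda>x. restrict x ?N) q0)"
        "g' \<in> set_pmf (map_pmf (\<lambda>x. restrict x ?N) q0)"
        and eq: "restrict (mkm g b) A = restrict (mkm g' b) A"
      show "g = g'"
      proof
        fix i show "g i = g' i"
        proof (cases "b i")
          case True then have "i \<in> A" using NA by auto
          then show ?thesis using fun_cong[OF eq, of i] True by (auto simp: mkm_def)
        next
          case False then show ?thesis using g by auto
        qed
      qed
    qed
    show ?thesis by (simp add: eq\<mu> ent_coords_def entropy_map_inj[OF inj])
  qed
  have "(\<Sum>b\<in>set_pmf BA. pmf BA b * shannon_entropy (\<mu> b))
      = (\<Sum>b\<in>set_pmf BA. pmf BA b * ent_coords q0 {i. b i})"
    by (intro sum.cong refl) (simp add: H\<mu>)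
  also have "\<dots> = EP A (ent_coords q0) p"
  proof -
    define FA where "FA = (\<lambda>N i. i \<in> N) ` Pow A"
    have sub: "set_pmf BA \<subseteq> FA"
    proof
      fix b assume b: "b \<in> set_pmf BA"
      have "b = (\<lambda>i. i \<in> {i. b i})" by simp
      moreover have "{i. b i} \<in> Pow A" using BAout[OF b] by blast
      ultimately show "b \<in> FA" unfolding FA_def by blast
    qed
    have finFA: "finite FA" using finA by (simp add: FA_def)
    have "(\<Sum>b\<in>set_pmf BA. pmf BA b * ent_coords q0 {i. b i}) = (\<Sum>b\<in>FA. pmf BA b * ent_coords q0 {i. b i})"
      by (rule sum.mono_neutral_left[OF finFA sub]) (auto simp: set_pmf_eq)
    also have "\<dots> = (\<Sum>N\<in>Pow A. pmf BA (\<lambda>i. i \<in> N) * ent_coords q0 N)"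
    proof -
      have "inj_on (\<lambda>N i. i \<in> N) (Pow A)"
        by (rule inj_onI) (metis Collect_mem_eq)
      then show ?thesis unfolding FA_def by (subst sum.reindex) auto
    qed
    also have "\<dots> = EP A (ent_coords q0) p"
      unfolding EP_def
    proof (intro sum.cong refl)
      fix N assume N: "N \<in> Pow A"
      then have finN: "finite N" using finA finite_subset by blast
      have "pmf BA (\<lambda>i. i \<in> N) = (\<Prod>i\<in>A. pmf (bernoulli_pmf p) (i \<in> N))"
        unfolding BA_def using N by (intro pmf_Pi' finA) auto
      also have "\<dots> = (\<Prod>i\<in>A. if i \<in> N then p else 1 - p)"
        using p by (intro prod.cong refl) auto
      also have "\<dots> = p ^ card N * (1 - p) ^ (card A - card N)"
        using N finA finN by (simp add: prod.If_cases Int_absorb1 Diff_eq[symmetric] card_Diff_subset)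
      finally show "pmf BA (\<lambda>i. i \<in> N) * ent_coords q0 N = p ^ card N * (1 - p) ^ (card A - card N) * ent_coords q0 N"
        by simp
    qed
    finally show ?thesis .
  qed
  finally show ?thesis using mix by (simp add: BA_def p_def)
qed


lemma EP_add: "EP A (\<lambda>N. f N + g N) p = EP A f p + EP A g p"
  by (simp add: EP_def sum.distrib algebra_simps)

lemma masked_cmi:
  fixes q0 :: "(nat \<Rightarrow> 'b) pmf"
  assumes ij: "i < d" "j < d" "i \<noteq> j" and fin: "finite (set_pmf q0)" and t: "t \<ge> 0"
  shows "cond_mutual_info (masked d q0 t) i j ({..<d} - {i, j}) =
    exp (- t) ^ 2 * EP ({..<d} - {i, j}) (\<lambda>N. ent_coords q0 (insert i N) + ent_coords q0 (insert j N)
        - ent_coords q0 N - ent_coords q0 (insert i (insert j N))) (exp (- t))"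
proof -
  define K where "K = {..<d} - {i, j}"
  define p where "p = exp (- t)"
  define h where "h = ent_coords q0"
  define W where "W = (\<lambda>A. shannon_entropy (Pi_pmf A False (\<lambda>_::nat. bernoulli_pmf p)))"
  have finK: "finite K" and iK: "i \<notin> K" and jK: "j \<notin> K" by (auto simp: K_def)
  have s1: "{i} \<union> K = insert i K" "{j} \<union> K = insert j K" "{i} \<union> ({j} \<union> K) = insert i (insert j K)"
    "{i} \<union> insert j K = insert i (insert j K)" by auto
  have sub: "K \<subseteq> {..<d}" "insert i K \<subseteq> {..<d}" "insert j K \<subseteq> {..<d}" "insert i (insert j K) \<subseteq> {..<d}"
    using ij by (auto simp: K_def)
  have ent: "ent_coords (masked d q0 t) X = W X + EP X h p" if "X \<subseteq> {..<d}" for X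
    using ent_masked[OF that fin t] by (simp add: W_def h_def p_def)
  have W1: "W (insert i K) = W {i} - W {} + W K" "W (insert j K) = W {i} - W {} + W K"
    "W (insert i (insert j K)) = 2 * (W {i} - W {}) + W K"
    using finK iK jK ij WA_insert[of "{}" i "bernoulli_pmf p"]
    by (simp_all add: W_def WA_insert)
  have E1: "EP (insert i K) h p = p * EP K (\<lambda>N. h (insert i N)) p + (1 - p) * EP K h p"
    using finK iK by (rule EP_insert)
  have E2: "EP (insert j K) h p = p * EP K (\<lambda>N. h (insert j N)) p + (1 - p) * EP K h p"
    using finK jK by (rule EP_insert)
  have E3: "EP (insert i (insert j K)) h p =
      p * (p * EP K (\<lambda>N. h (insert i (insert j N))) p + (1 - p) * EP K (\<lambda>N. h (insert i N)) p)
      + (1 - p) * (p * EP K (\<lambda>N. h (insert j N)) p + (1 - p) * EP K h p)"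
    using finK iK jK ij by (simp add: EP_insert)
  have lin: "EP K (\<lambda>N. h (insert i N) + h (insert j N) - h N - h (insert i (insert j N))) p
     = EP K (\<lambda>N. h (insert i N)) p + EP K (\<lambda>N. h (insert j N)) p - EP K h p
       - EP K (\<lambda>N. h (insert i (insert j N))) p"
    by (simp add: EP_diff EP_add)
  show ?thesis
    unfolding K_def[symmetric] p_def[symmetric] h_def[symmetric]
    unfolding cond_mutual_info_def cond_ent_coords_def s1
      ent[OF sub(1)] ent[OF sub(2)] ent[OF sub(3)] ent[OF sub(4)] W1 E1 E2 E3 lin
    by (simp add: power2_eq_square algebra_simps)
qed

lemma restrict_in_ext: "v \<in> set_pmf (map_pmf (\<lambda>x. restrict x B) q) \<Longrightarrow> v \<in> extensional B"
  by auto

lemma ent_submod_coords: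
  fixes q0 :: "(nat \<Rightarrow> 'b) pmf"
  assumes fin: "finite (set_pmf q0)"
  shows "ent_coords q0 N + ent_coords q0 (insert i (insert j N))
       \<le> ent_coords q0 (insert i N) + ent_coords q0 (insert j N)"
proof -
  define \<nu> where "\<nu> = map_pmf (\<lambda>x. (x i, x j, restrict x N)) q0"
  have finv: "finite (set_pmf \<nu>)" using fin by (simp add: \<nu>_def)
  have e1: "shannon_entropy \<nu> = ent_coords q0 (insert i (insert j N))"
  proof -
    have "\<nu> = map_pmf (\<lambda>v. (v i, v j, restrict v N)) (map_pmf (\<lambda>x. restrict x (insert i (insert j N))) q0)"
      unfolding \<nu>_def map_pmf_comp by (intro map_pmf_cong refl) (auto simp: restrict_def fun_eq_iff)
    moreover have "inj_on (\<lambda>v. (v i, v j, restrict v N)) (set_pmf (map_pmf (\<lambda>x. restrict x (insert i (insert j N))) q0))"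
    proof (rule inj_onI)
      fix v v' assume "v \<in> set_pmf (map_pmf (\<lambda>x. restrict x (insert i (insert j N))) q0)"
        "v' \<in> set_pmf (map_pmf (\<lambda>x. restrict x (insert i (insert j N))) q0)"
        and eq: "(v i, v j, restrict v N) = (v' i, v' j, restrict v' N)"
      then have ext: "v \<in> extensional (insert i (insert j N))" "v' \<in> extensional (insert i (insert j N))"
        by (auto dest: restrict_in_ext)
      from eq have vN: "restrict v N = restrict v' N" by simp
      show "v = v'"
      proof
        fix k show "v k = v' k"
        proof (cases "k \<in> N")
          case True then show ?thesis using fun_cong[OF vN, of k] by simp
        next
          case False then show ?thesis using eq ext by (cases "k = i"; cases "k = j") (auto simp: extensional_def)
        qed
      qed
    qed
    ultimately show ?thesis by (simp add: ent_coords_def entropy_map_inj)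
  qed
  have e2: "shannon_entropy (map_pmf (\<lambda>(a,b,c). (a,c)) \<nu>) = ent_coords q0 (insert i N)"
  proof -
    have "map_pmf (\<lambda>(a,b,c). (a,c)) \<nu> = map_pmf (\<lambda>v. (v i, restrict v N)) (map_pmf (\<lambda>x. restrict x (insert i N)) q0)"
      unfolding \<nu>_def map_pmf_comp by (intro map_pmf_cong refl) (auto simp: restrict_def fun_eq_iff)
    moreover have "inj_on (\<lambda>v. (v i, restrict v N)) (set_pmf (map_pmf (\<lambda>x. restrict x (insert i N)) q0))"
    proof (rule inj_onI)
      fix v v' assume "v \<in> set_pmf (map_pmf (\<lambda>x. restrict x (insert i N)) q0)"
        "v' \<in> set_pmf (map_pmf (\<lambda>x. restrict x (insert i N)) q0)"
        and eq: "(v i, restrict v N) = (v' i, restrict v' N)"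
      then have ext: "v \<in> extensional (insert i N)" "v' \<in> extensional (insert i N)"
        by (auto dest: restrict_in_ext)
      from eq have vN: "restrict v N = restrict v' N" by simp
      show "v = v'"
      proof
        fix k show "v k = v' k"
        proof (cases "k \<in> N")
          case True then show ?thesis using fun_cong[OF vN, of k] by simp
        next
          case False then show ?thesis using eq ext by (cases "k = i"; cases "k = j") (auto simp: extensional_def)
        qed
      qed
    qed
    ultimately show ?thesis by (simp add: ent_coords_def entropy_map_inj)
  qed
  have e3: "shannon_entropy (map_pmf (\<lambda>(a,b,c). (b,c)) \<nu>) = ent_coords q0 (insert j N)"
  proof -
    have "map_pmf (\<lambda>(a,b,c). (b,c)) \<nu> = map_pmf (\<lambda>v. (v j, restrict v N)) (map_pmf (\<lambda>x. restrict x (insert j N)) q0)"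
      unfolding \<nu>_def map_pmf_comp by (intro map_pmf_cong refl) (auto simp: restrict_def fun_eq_iff)
    moreover have "inj_on (\<lambda>v. (v j, restrict v N)) (set_pmf (map_pmf (\<lambda>x. restrict x (insert j N)) q0))"
    proof (rule inj_onI)
      fix v v' assume "v \<in> set_pmf (map_pmf (\<lambda>x. restrict x (insert j N)) q0)"
        "v' \<in> set_pmf (map_pmf (\<lambda>x. restrict x (insert j N)) q0)"
        and eq: "(v j, restrict v N) = (v' j, restrict v' N)"
      then have ext: "v \<in> extensional (insert j N)" "v' \<in> extensional (insert j N)"
        by (auto dest: restrict_in_ext)
      from eq have vN: "restrict v N = restrict v' N" by simp
      show "v = v'"
      proof
        fix k show "v k = v' k"
        proof (cases "k \<in> N")
          case True then show ?thesis using fun_cong[OF vN, of k] by simp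
        next
          case False then show ?thesis using eq ext by (cases "k = i"; cases "k = j") (auto simp: extensional_def)
        qed
      qed
    qed
    ultimately show ?thesis by (simp add: ent_coords_def entropy_map_inj)
  qed
  have e4: "shannon_entropy (map_pmf (\<lambda>(a,b,c). c) \<nu>) = ent_coords q0 N"
  proof -
    have "map_pmf (\<lambda>(a,b,c). c) \<nu> = map_pmf (\<lambda>x. restrict x N) q0"
      unfolding \<nu>_def map_pmf_comp by simp
    then show ?thesis by (simp add: ent_coords_def)
  qed
  show ?thesis using entropy_submod[OF finv] e1 e2 e3 e4 by linarith
qed


definition H0 :: "nat \<Rightarrow> (nat set \<Rightarrow> real) \<Rightarrow> real \<Rightarrow> real" where
  "H0 d h p = EP {..<d} h p"

definition D1 :: "nat \<Rightarrow> (nat set \<Rightarrow> real) \<Rightarrow> real \<Rightarrow> real" where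
  "D1 d h p = (\<Sum>a\<in>{..<d}. EP ({..<d} - {a}) (\<lambda>N. h (insert a N) - h N) p)"

definition D2 :: "nat \<Rightarrow> (nat set \<Rightarrow> real) \<Rightarrow> real \<Rightarrow> real" where
  "D2 d h p = (\<Sum>a\<in>{..<d}. \<Sum>b\<in>{..<d} - {a}. EP ({..<d} - {a} - {b})
      (\<lambda>N. (h (insert a (insert b N)) - h (insert b N)) - (h (insert a N) - h N)) p)"

lemma H0_deriv: "(H0 d h has_real_derivative D1 d h p) (at p)"
  unfolding H0_def D1_def by (rule EP_deriv) simp

lemma D1_deriv: "(D1 d h has_real_derivative D2 d h p) (at p)"
  unfolding D1_def D2_def
  by (rule DERIV_sum, rule DERIV_cong[OF EP_deriv]) simp_all

lemma D2_cont: "continuous_on UNIV (D2 d h)"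
  unfolding D2_def EP_def by (intro continuous_intros)

lemma exp_minus_tendsto: "((\<lambda>t::real. exp (- t)) \<longlongrightarrow> 0) at_top"
  by (rule filterlim_compose[OF exp_at_bot filterlim_uminus_at_bot_at_top])

lemma ftc_exp:
  fixes G g :: "real \<Rightarrow> real"
  assumes G: "\<And>p. (G has_real_derivative g p) (at p)"
    and gc: "continuous_on UNIV g"
    and nn: "\<And>t. t \<ge> 0 \<Longrightarrow> - exp (- t) * g (exp (- t)) \<ge> 0"
  shows "((\<lambda>t. - exp (- t) * g (exp (- t))) has_integral (G 0 - G 1)) {0..}"
proof (rule has_integral_to_inf)
  have cont: "continuous_on S (\<lambda>t. - exp (- t) * g (exp (- t)))" for S
    by (intro continuous_intros continuous_on_compose2[OF gc]) auto
  show "(\<lambda>t. - exp (- t) * g (exp (- t))) integrable_on {0..y}" for y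
    by (rule integrable_continuous_interval[OF cont])
  have F: "((\<lambda>t. G (exp (- t))) has_real_derivative (- exp (- t) * g (exp (- t)))) (at t)" for t
  proof -
    have e: "((\<lambda>t. exp (- t)) has_real_derivative - exp (- t)) (at t)"
      by (auto intro!: derivative_eq_intros)
    show ?thesis using DERIV_chain2[OF G e] by (simp add: mult.commute)
  qed
  have "((\<lambda>t. - exp (- t) * g (exp (- t))) has_integral (G (exp (- y)) - G (exp (- 0)))) {0..y}" if "y \<ge> 0" for y
    using that F
    by (intro fundamental_theorem_of_calculus)
       (auto simp flip: has_real_derivative_iff_has_vector_derivative intro: has_field_derivative_at_within)
  then have ev: "\<forall>\<^sub>F y in at_top. integral {0..y} (\<lambda>t. - exp (- t) * g (exp (- t))) = G (exp (- y)) - G 1"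
    by (intro eventually_at_top_linorderI[of 0] integral_unique) auto
  have Gc: "isCont G 0" using G by (rule DERIV_isCont)
  have "((\<lambda>y. G (exp (- y)) - G 1) \<longlongrightarrow> G 0 - G 1) at_top"
    by (intro tendsto_intros isCont_tendsto_compose[OF Gc] exp_minus_tendsto)
  then show "((\<lambda>y. integral {0..y} (\<lambda>t. - exp (- t) * g (exp (- t)))) \<longlongrightarrow> G 0 - G 1) at_top"
    using ev by (simp add: filterlim_cong)
qed (use nn in auto)


lemma cmi_formula:
  fixes q0 :: "(nat \<Rightarrow> 'b) pmf"
  assumes fin: "finite (set_pmf q0)" and t: "t \<ge> 0"
  shows "cmi_sum d q0 t = - (exp (- t))\<^sup>2 * D2 d (ent_coords q0) (exp (- t))"
proof -
  let ?h = "ent_coords q0"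
  let ?p = "exp (- t)"
  have "cmi_sum d q0 t = (\<Sum>i<d. \<Sum>j\<in>{..<d} - {i}. - (?p\<^sup>2) * EP ({..<d} - {i} - {j})
      (\<lambda>N. (?h (insert i (insert j N)) - ?h (insert j N)) - (?h (insert i N) - ?h N)) ?p)"
    unfolding cmi_sum_def
  proof (intro sum.cong refl)
    fix i j assume ij: "i \<in> {..<d}" "j \<in> {..<d} - {i}"
    have K: "{..<d} - {i, j} = {..<d} - {i} - {j}" by auto
    have "EP ({..<d} - {i} - {j}) (\<lambda>N. ?h (insert i N) + ?h (insert j N) - ?h N - ?h (insert i (insert j N))) ?p
        = EP ({..<d} - {i} - {j}) (\<lambda>N. - ((?h (insert i (insert j N)) - ?h (insert j N)) - (?h (insert i N) - ?h N))) ?p"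
      by (rule EP_cong) simp
    also have "\<dots> = - EP ({..<d} - {i} - {j}) (\<lambda>N. (?h (insert i (insert j N)) - ?h (insert j N)) - (?h (insert i N) - ?h N)) ?p"
      by (rule EP_uminus)
    finally show "cond_mutual_info (masked d q0 t) i j ({..<d} - {i, j}) =
        - (?p\<^sup>2) * EP ({..<d} - {i} - {j})
      (\<lambda>N. (?h (insert i (insert j N)) - ?h (insert j N)) - (?h (insert i N) - ?h N)) ?p"
      using ij masked_cmi[of i d j q0 t, OF _ _ _ fin t] unfolding K by simp
  qed
  then show ?thesis by (simp add: D2_def sum_distrib_left)
qed

lemma D2_nonpos:
  fixes q0 :: "(nat \<Rightarrow> 'b) pmf"
  assumes fin: "finite (set_pmf q0)" and p: "0 \<le> p" "p \<le> 1"
  shows "D2 d (ent_coords q0) p \<le> 0"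
  unfolding D2_def
proof (intro sum_nonpos)
  fix a b
  let ?h = "ent_coords q0"
  have "0 \<le> EP ({..<d} - {a} - {b}) (\<lambda>N. - ((?h (insert a (insert b N)) - ?h (insert b N)) - (?h (insert a N) - ?h N))) p"
  proof (intro EP_nonneg p)
    fix N show "0 \<le> - ((?h (insert a (insert b N)) - ?h (insert b N)) - (?h (insert a N) - ?h N))"
      using ent_submod_coords[OF fin, of N a b] by linarith
  qed
  then show "EP ({..<d} - {a} - {b}) (\<lambda>N. (?h (insert a (insert b N)) - ?h (insert b N)) - (?h (insert a N) - ?h N)) p \<le> 0"
    using EP_uminus[of "{..<d} - {a} - {b}" "\<lambda>N. (?h (insert a (insert b N)) - ?h (insert b N)) - (?h (insert a N) - ?h N)" p]
    by linarith
qed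

lemma ent_coord_eq:
  "ent_coord q i = ent_coords q {i}"
proof -
  have "map_pmf (\<lambda>x. x i) q = map_pmf (\<lambda>v. v i) (map_pmf (\<lambda>x. restrict x {i}) q)"
    by (simp add: map_pmf_comp)
  moreover have "inj_on (\<lambda>v. v i) (set_pmf (map_pmf (\<lambda>x. restrict x {i}) q))"
  proof (rule inj_onI)
    fix v v' assume "v \<in> set_pmf (map_pmf (\<lambda>x. restrict x {i}) q)" "v' \<in> set_pmf (map_pmf (\<lambda>x. restrict x {i}) q)"
      and "v i = v' i"
    then show "v = v'" by (auto simp: fun_eq_iff)
  qed
  ultimately show ?thesis by (simp add: ent_coord_def ent_coords_def entropy_map_inj)
qed


theorem mainTheorem13:
  fixes S d :: nat and q0 :: "(nat \<Rightarrow> nat) pmf"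
  assumes "set_pmf q0 \<subseteq> PiE {..<d} (\<lambda>_. {..<S})"
  shows "(cmi_sum d q0 has_integral dual_total_correlation d q0) {0..} \<and>
         ((\<lambda>t. (exp t - 1) * cmi_sum d q0 t) has_integral total_correlation d q0) {0..} \<and>
         effective_total_correlation d q0
           \<le> min (dual_total_correlation d q0) (total_correlation d q0)"
proof -
  have fin: "finite (set_pmf q0)"
    by (rule finite_subset[OF assms]) (simp add: finite_PiE)
  define h where "h = ent_coords q0"
  have h0: "h {} = 0" by (simp add: h_def ent_coords_empty)
  define fB where "fB = (\<lambda>t::real. - exp (- t) * (exp (- t) * D2 d h (exp (- t))))"
  define fC where "fC = (\<lambda>t::real. - exp (- t) * ((1 - exp (- t)) * D2 d h (exp (- t))))"
  have ep: "0 < exp (- t)" "exp (- t) \<le> 1" if "t \<ge> 0" for t :: real using that by auto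
  have D2n: "D2 d h (exp (- t)) \<le> 0" if "t \<ge> 0" for t :: real
    unfolding h_def using ep[OF that] by (intro D2_nonpos fin) auto
  have fBn: "fB t \<ge> 0" if "t \<ge> 0" for t
    using D2n[OF that] ep[OF that] unfolding fB_def
    by (simp add: mult_nonneg_nonpos mult_nonpos_nonneg)
  have cmiB: "cmi_sum d q0 t = fB t" if "t \<ge> 0" for t
    using cmi_formula[OF fin that, of d] by (simp add: fB_def h_def power2_eq_square)
  have cmiC: "(exp t - 1) * cmi_sum d q0 t = fC t" if "t \<ge> 0" for t
  proof -
    have "exp t * exp (- t) = 1" by (simp add: exp_minus_inverse)
    then show ?thesis unfolding cmiB[OF that] fB_def fC_def by (simp add: algebra_simps)
  qed
  have eqB: "(cmi_sum d q0 has_integral X) {0..} = (fB has_integral X) {0..}" for X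
    by (rule has_integral_cong) (rule cmiB, simp)
  have eqC: "((\<lambda>t. (exp t - 1) * cmi_sum d q0 t) has_integral X) {0..} = (fC has_integral X) {0..}" for X
    by (rule has_integral_cong) (rule cmiC, simp)
  have intB: "(fB has_integral (h {..<d} - (\<Sum>a<d. h {..<d} - h ({..<d} - {a})))) {0..}"
  proof -
    define G where "G = (\<lambda>p. p * D1 d h p - H0 d h p)"
    have G: "(G has_real_derivative (p * D2 d h p)) (at p)" for p
      unfolding G_def
      by (rule DERIV_cong[OF DERIV_diff[OF DERIV_mult'[OF DERIV_ident D1_deriv] H0_deriv]]) simp
    have gc: "continuous_on UNIV (\<lambda>p. p * D2 d h p)"
      by (intro continuous_intros D2_cont)
    have "((\<lambda>t. - exp (- t) * (exp (- t) * D2 d h (exp (- t)))) has_integral (G 0 - G 1)) {0..}"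
      by (rule ftc_exp[OF G gc]) (use fBn in \<open>simp add: fB_def\<close>)
    moreover have "G 0 - G 1 = h {..<d} - (\<Sum>a<d. h {..<d} - h ({..<d} - {a}))"
    proof -
      have "D1 d h 1 = (\<Sum>a<d. h {..<d} - h ({..<d} - {a}))"
        unfolding D1_def by (intro sum.cong refl) (auto simp: EP_1 insert_absorb)
      then show ?thesis by (simp add: G_def H0_def EP_1 EP_0 h0)
    qed
    ultimately show ?thesis by (simp add: fB_def)
  qed
  have B: "(cmi_sum d q0 has_integral dual_total_correlation d q0) {0..}"
  proof -
    have dB: "dual_total_correlation d q0 = h {..<d} - (\<Sum>a<d. h {..<d} - h ({..<d} - {a}))"
      unfolding dual_total_correlation_def cond_ent_coords_def h_def
      by (intro arg_cong2[where f = minus] refl sum.cong) (auto simp: insert_absorb)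
    show ?thesis unfolding eqB dB by (rule intB)
  qed
  have intC: "(fC has_integral ((\<Sum>a<d. h {a}) - h {..<d})) {0..}"
  proof -
    define G where "G = (\<lambda>p. (1 - p) * D1 d h p + H0 d h p)"
    have G: "(G has_real_derivative ((1 - p) * D2 d h p)) (at p)" for p
      unfolding G_def
      by (rule DERIV_cong[OF DERIV_add[OF DERIV_mult'[OF DERIV_diff[OF DERIV_const DERIV_ident] D1_deriv] H0_deriv]]) simp
    have gc: "continuous_on UNIV (\<lambda>p. (1 - p) * D2 d h p)"
      by (intro continuous_intros D2_cont)
    have fCn: "fC t \<ge> 0" if "t \<ge> 0" for t
      using D2n[OF that] ep[OF that] unfolding fC_def
      by (simp add: mult_nonneg_nonpos mult_nonpos_nonneg)
    have "((\<lambda>t. - exp (- t) * ((1 - exp (- t)) * D2 d h (exp (- t)))) has_integral (G 0 - G 1)) {0..}"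
      by (rule ftc_exp[OF G gc]) (use fCn in \<open>simp add: fC_def\<close>)
    moreover have "G 0 - G 1 = (\<Sum>a<d. h {a}) - h {..<d}"
      by (simp add: G_def H0_def D1_def EP_1 EP_0 h0)
    ultimately show ?thesis by (simp add: fC_def)
  qed
  have C: "((\<lambda>t. (exp t - 1) * cmi_sum d q0 t) has_integral total_correlation d q0) {0..}"
  proof -
    have dC: "total_correlation d q0 = (\<Sum>a<d. h {a}) - h {..<d}"
      unfolding total_correlation_def h_def by (simp add: ent_coord_eq)
    show ?thesis unfolding eqC dC by (rule intC)
  qed
  have Dle: "effective_total_correlation d q0 \<le> min (dual_total_correlation d q0) (total_correlation d q0)"
  proof -
    define g where "g = (\<lambda>t::real. min 1 t * fB t)"
    have eff: "effective_total_correlation d q0 = integral {0..} g"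
      unfolding effective_total_correlation_def g_def by (rule integral_cong) (simp add: cmiB)
    have fBc: "continuous_on UNIV fB"
      unfolding fB_def by (intro continuous_intros continuous_on_compose2[OF D2_cont]) auto
    have gc: "continuous_on {0..} g"
      unfolding g_def by (intro continuous_intros continuous_on_subset[OF fBc]) auto
    have leb: "{0::real..} \<in> sets lebesgue" by (rule lebesgue_closedin[of UNIV]) (auto simp: closed_closedin[symmetric])
    have gint: "g integrable_on {0..}"
    proof (rule measurable_bounded_by_integrable_imp_integrable_real)
      show "g \<in> borel_measurable (lebesgue_on {0..})"
        by (rule continuous_imp_measurable_on_sets_lebesgue[OF gc leb])
      show "fB integrable_on {0..}" using intB by blast
      show "\<bar>g x\<bar> \<le> fB x" if "x \<in> {0..}" for x
      proof -
        have "0 \<le> fB x" "0 \<le> x" using fBn[of x] that by auto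
        then have "\<bar>min 1 x\<bar> \<le> 1" "\<bar>fB x\<bar> = fB x" by auto
        then have "\<bar>min 1 x\<bar> * fB x \<le> 1 * fB x"
          using \<open>0 \<le> fB x\<close> by (intro mult_right_mono) auto
        then show ?thesis unfolding g_def abs_mult using \<open>\<bar>fB x\<bar> = fB x\<close> by simp
      qed
    qed (rule leb)
    have "integral {0..} g \<le> integral {0..} fB"
    proof (rule integral_le[OF gint])
      show "fB integrable_on {0..}" using intB by blast
      fix t :: real assume t: "t \<in> {0..}"
      have "min 1 t \<le> 1" by simp
      then have "min 1 t * fB t \<le> 1 * fB t"
        using fBn[of t] t by (intro mult_right_mono) auto
      then show "g t \<le> fB t" by (simp add: g_def)
    qed
    also have "integral {0..} fB = dual_total_correlation d q0"
      using B unfolding eqB by (rule integral_unique)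
    finally have le1: "integral {0..} g \<le> dual_total_correlation d q0" .
    have "integral {0..} g \<le> integral {0..} fC"
    proof (rule integral_le[OF gint])
      show "fC integrable_on {0..}" using intC by blast
      fix t :: real assume t: "t \<in> {0..}"
      have "min 1 t \<le> exp t - 1" using exp_ge_add_one_self[of t] by linarith
      then have "min 1 t * fB t \<le> (exp t - 1) * fB t"
        using fBn[of t] t by (intro mult_right_mono) auto
      also have "\<dots> = fC t" using cmiC[of t] cmiB[of t] t by simp
      finally show "g t \<le> fC t" by (simp add: g_def)
    qed
    also have "integral {0..} fC = total_correlation d q0"
      using C unfolding eqC by (rule integral_unique)
    finally have le2: "integral {0..} g \<le> total_correlation d q0" .
    show ?thesis using eff le1 le2 by simp
  qed
  show ?thesis using B C Dle by blast
qed

end
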